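(* Let $Q$ be a quiver with a contravariant involution $\sigma$. The category $\mathsf{Rep}_{\mathbb{F}_1}(Q)$, with the duality $(P,\Theta)$ described below, is combinatorial, has the finite direct decomposition property and satisfies the Reduction Assumption.
   Context: $\mathsf{Vect}_{\mathbb{F}_1}$: objects are finite pointed sets (basepoint $*$); morphisms are basepoint preserving maps $f:V\to W$ whose restriction to $V\setminus f^{-1}( * )$ is injective. Inflations are injective morphisms, deflations are surjective morphisms for which the preimage of each non-basepoint is a singleton; zero object $\{*\}$. The cokernel $V/U$ of $U\rightarrowtail V$ collapses $U$ to $*$. Coproduct $V\oplus V'$ is the wedge (disjoint union with basepoints identified). Duality $V^\vee=\mathrm{Hom}(V,\{*,1\})$, identified with $V$ via $v\mapsto\delta_v$, so $(-)^\vee$ squares to the identity. $\mathsf{Rep}_{\mathbb{F}_1}(Q)$: representations $(U=\bigoplus_{i\in Q_0}U_i,\{u_\alpha\}_{\alpha\in Q_1})$ with $U_i\in\mathsf{Vect}_{\mathbb{F}_1}$, finitely many non-zero, and morphisms $u_\alpha:U_i\to U_j$ for $\alpha:i\to j$; inflations, deflations, coproducts are defined pointwise in $Q_0$. A contravariant involution $\sigma$ consists of involutions of $Q_0$ and $Q_1$ with $\sigma(\alpha):\sigma(j)\to\sigma(i)$ for $\alpha:i\to j$. Duality: $P(U)_i=U^\vee_{\sigma(i)}$, $P(u)_\alpha=u^\vee_{\sigma(\alpha)}$, $P(\{\phi_i\})=\{\phi^\vee_{\sigma(i)}\}$, $\Theta=\mathrm{id}$. A symmetric form is $(N,\psi_N)$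 with $\psi_N:N\to P(N)$ an isomorphism and $P(\psi_N)\Theta_N=\psi_N$; isometries preserve $\psi$. For an inflation $j:U\rightarrowtail N$, $U^\perp$ is a kernel of $P(j)\psi_N$; $j$ is isotropic if $P(j)\psi_Nj=0$ and $U\to U^\perp$ is an inflation. Combinatorial: each inflation $j:U\rightarrowtail X_1\oplus X_2$ equals $(j_1\oplus j_2)\circ f$ for inflations $j_k:U_k\rightarrowtail X_k$ and an isomorphism $f:U\to U_1\oplus U_2$. Finite direct decomposition property: each object $W$ admits only finitely many decompositions $U\oplus V\simeq W$ up to isomorphism. Reduction Assumption: for each isotropic $U\rightarrowtail N$ with $k:U^\perp\rightarrowtail N$ and $\pi:U^\perp\twoheadrightarrow U^\perp/U=:N/\!\!/U$, there is a symmetric form $\psi_{N/\!\!/U}$, unique up to isometry, with $P(k)\psi_Nk=P(\pi)\psi_{N/\!\!/U}\pi$. *)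

theory Defs
  imports Main
begin

record ('v, 'e) quiver =
  src :: "'e \<Rightarrow> 'v"
  tgt :: "'e \<Rightarrow> 'v"
  sv  :: "'v \<Rightarrow> 'v"
  se  :: "'e \<Rightarrow> 'e"

definition quiver_inv :: "('v, 'e) quiver \<Rightarrow> bool" where
  "quiver_inv Q \<longleftrightarrow> sv Q \<circ> sv Q = id \<and> se Q \<circ> se Q = id \<and>
     (\<forall>a. src Q (se Q a) = sv Q (tgt Q a) \<and> tgt Q (se Q a) = sv Q (src Q a))"

text \<open>A finite pointed set is modelled by its finite set of non-basepoint elements
(a finite subset of nat); a pointed map is a partial map, None being the basepoint.\<close>

definition f1_mor :: "nat set \<Rightarrow> nat set \<Rightarrow> (nat \<rightharpoonup> nat) \<Rightarrow> bool" where
  "f1_mor V W f \<longleftrightarrow> dom f \<subseteq> V \<and> ran f \<subseteq> W \<and> inj_on f (dom f)"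

definition kcomp :: "(nat \<rightharpoonup> nat) \<Rightarrow> (nat \<rightharpoonup> nat) \<Rightarrow> (nat \<rightharpoonup> nat)" where
  "kcomp g f = (\<lambda>x. Option.bind (f x) g)"

text \<open>Dual (transpose) map, using the identification of a dual with the set itself.\<close>
definition transp :: "(nat \<rightharpoonup> nat) \<Rightarrow> (nat \<rightharpoonup> nat)" where
  "transp f = (\<lambda>w. if w \<in> ran f then Some (THE v. f v = Some w) else None)"

type_synonym 'v obj_sets = "'v \<Rightarrow> nat set"
type_synonym ('v, 'e) rep = "('v \<Rightarrow> nat set) \<times> ('e \<Rightarrow> nat \<rightharpoonup> nat)"
type_synonym 'v rmor = "'v \<Rightarrow> nat \<rightharpoonup> nat"

definition is_rep :: "('v, 'e) quiver \<Rightarrow> ('v, 'e) rep \<Rightarrow> bool" where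
  "is_rep Q R \<longleftrightarrow> finite {i. fst R i \<noteq> {}} \<and> (\<forall>i. finite (fst R i)) \<and>
     (\<forall>a. f1_mor (fst R (src Q a)) (fst R (tgt Q a)) (snd R a))"

definition rep_mor :: "('v, 'e) quiver \<Rightarrow> ('v, 'e) rep \<Rightarrow> ('v, 'e) rep \<Rightarrow> 'v rmor \<Rightarrow> bool" where
  "rep_mor Q R S \<phi> \<longleftrightarrow> (\<forall>i. f1_mor (fst R i) (fst S i) (\<phi> i)) \<and>
     (\<forall>a. kcomp (\<phi> (tgt Q a)) (snd R a) = kcomp (snd S a) (\<phi> (src Q a)))"

definition rcomp :: "'v rmor \<Rightarrow> 'v rmor \<Rightarrow> 'v rmor" where
  "rcomp \<psi> \<phi> = (\<lambda>i. kcomp (\<psi> i) (\<phi> i))"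

definition rid :: "('v, 'e) rep \<Rightarrow> 'v rmor" where
  "rid R = (\<lambda>i x. if x \<in> fst R i then Some x else None)"

definition rzero :: "'v rmor" where
  "rzero = (\<lambda>i x. None)"

definition rep_iso :: "('v, 'e) quiver \<Rightarrow> ('v, 'e) rep \<Rightarrow> ('v, 'e) rep \<Rightarrow> 'v rmor \<Rightarrow> bool" where
  "rep_iso Q R S \<phi> \<longleftrightarrow> rep_mor Q R S \<phi> \<and>
     (\<exists>\<phi>'. rep_mor Q S R \<phi>' \<and> rcomp \<phi>' \<phi> = rid R \<and> rcomp \<phi> \<phi>' = rid S)"

definition risom :: "('v, 'e) quiver \<Rightarrow> ('v, 'e) rep \<Rightarrow> ('v, 'e) rep \<Rightarrow> bool" where
  "risom Q R S \<longleftrightarrow> (\<exists>\<phi>. rep_iso Q R S \<phi>)"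

text \<open>Inflations: pointwise injective morphisms.\<close>
definition inflation :: "('v, 'e) quiver \<Rightarrow> ('v, 'e) rep \<Rightarrow> ('v, 'e) rep \<Rightarrow> 'v rmor \<Rightarrow> bool" where
  "inflation Q R S \<phi> \<longleftrightarrow> rep_mor Q R S \<phi> \<and> (\<forall>i. dom (\<phi> i) = fst R i)"

definition sum_map :: "(nat \<rightharpoonup> nat) \<Rightarrow> (nat \<rightharpoonup> nat) \<Rightarrow> (nat \<rightharpoonup> nat)" where
  "sum_map f g = (\<lambda>x. if even x then map_option (\<lambda>n. 2 * n) (f (x div 2))
                      else map_option (\<lambda>n. 2 * n + 1) (g (x div 2)))"

definition rsum :: "('v, 'e) rep \<Rightarrow> ('v, 'e) rep \<Rightarrow> ('v, 'e) rep" where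
  "rsum R S = (\<lambda>i. (\<lambda>n. 2 * n) ` fst R i \<union> (\<lambda>n. 2 * n + 1) ` fst S i,
               \<lambda>a. sum_map (snd R a) (snd S a))"

definition msum :: "'v rmor \<Rightarrow> 'v rmor \<Rightarrow> 'v rmor" where
  "msum \<phi> \<psi> = (\<lambda>i. sum_map (\<phi> i) (\<psi> i))"

definition dual_obj :: "('v, 'e) quiver \<Rightarrow> ('v, 'e) rep \<Rightarrow> ('v, 'e) rep" where
  "dual_obj Q R = (\<lambda>i. fst R (sv Q i), \<lambda>a. transp (snd R (se Q a)))"

definition dual_mor :: "('v, 'e) quiver \<Rightarrow> 'v rmor \<Rightarrow> 'v rmor" where
  "dual_mor Q \<phi> = (\<lambda>i. transp (\<phi> (sv Q i)))"

text \<open>Symmetric form: psi : N -> P(N) iso with P(psi) o Theta_N = psi, Theta_N = id.\<close>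
definition sym_form :: "('v, 'e) quiver \<Rightarrow> ('v, 'e) rep \<Rightarrow> 'v rmor \<Rightarrow> bool" where
  "sym_form Q N \<psi> \<longleftrightarrow> is_rep Q N \<and> rep_iso Q N (dual_obj Q N) \<psi> \<and>
     rcomp (dual_mor Q \<psi>) (rid N) = \<psi>"

definition is_kernel :: "('v, 'e) quiver \<Rightarrow> ('v, 'e) rep \<Rightarrow> 'v rmor \<Rightarrow> ('v, 'e) rep \<Rightarrow> 'v rmor \<Rightarrow> bool" where
  "is_kernel Q N \<phi> K k \<longleftrightarrow> is_rep Q K \<and> rep_mor Q K N k \<and> rcomp \<phi> k = rzero \<and>
     (\<forall>Z g. is_rep Q Z \<longrightarrow> rep_mor Q Z N g \<longrightarrow> rcomp \<phi> g = rzero \<longrightarrow>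
        (\<exists>!h. rep_mor Q Z K h \<and> rcomp k h = g))"

text \<open>Cokernel K/U of an inflation i : U >-> K: collapse the image of U to the basepoint.\<close>
definition quot :: "('v, 'e) quiver \<Rightarrow> ('v, 'e) rep \<Rightarrow> 'v rmor \<Rightarrow> ('v, 'e) rep" where
  "quot Q K i = (\<lambda>v. fst K v - ran (i v),
     \<lambda>a x. if x \<in> fst K (src Q a) - ran (i (src Q a)) then
              (case snd K a x of None \<Rightarrow> None
               | Some y \<Rightarrow> if y \<in> ran (i (tgt Q a)) then None else Some y)
            else None)"

definition quot_map :: "('v, 'e) rep \<Rightarrow> 'v rmor \<Rightarrow> 'v rmor" where
  "quot_map K i = (\<lambda>v x. if x \<in> fst K v - ran (i v) then Some x else None)"

text \<open>U^perp is a kernel of P(j) psi_N; j isotropic if P(j) psi_N j = 0 and U -> U^perp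
  is an inflation.\<close>
definition isotropic :: "('v, 'e) quiver \<Rightarrow> ('v, 'e) rep \<Rightarrow> 'v rmor \<Rightarrow> ('v, 'e) rep \<Rightarrow> 'v rmor \<Rightarrow> bool" where
  "isotropic Q N \<psi> U j \<longleftrightarrow> inflation Q U N j \<and>
     rcomp (dual_mor Q j) (rcomp \<psi> j) = rzero \<and>
     (\<exists>K k i. is_kernel Q N (rcomp (dual_mor Q j) \<psi>) K k \<and> rep_mor Q U K i \<and>
              rcomp k i = j \<and> inflation Q U K i)"

definition combinatorial :: "('v, 'e) quiver \<Rightarrow> bool" where
  "combinatorial Q \<longleftrightarrow> (\<forall>U X1 X2 j. is_rep Q U \<longrightarrow> is_rep Q X1 \<longrightarrow> is_rep Q X2 \<longrightarrow>
     inflation Q U (rsum X1 X2) j \<longrightarrow>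
     (\<exists>U1 U2 j1 j2 f. is_rep Q U1 \<and> is_rep Q U2 \<and> inflation Q U1 X1 j1 \<and>
        inflation Q U2 X2 j2 \<and> rep_iso Q U (rsum U1 U2) f \<and> j = rcomp (msum j1 j2) f))"

definition finite_direct_decomposition :: "('v, 'e) quiver \<Rightarrow> bool" where
  "finite_direct_decomposition Q \<longleftrightarrow> (\<forall>W. is_rep Q W \<longrightarrow>
     (\<exists>S. finite S \<and> (\<forall>(U, V) \<in> S. is_rep Q U \<and> is_rep Q V) \<and>
        (\<forall>U V. is_rep Q U \<longrightarrow> is_rep Q V \<longrightarrow> risom Q (rsum U V) W \<longrightarrow>
           (\<exists>(U', V') \<in> S. risom Q U U' \<and> risom Q V V'))))"

definition reduction_assumption :: "('v, 'e) quiver \<Rightarrow> bool" where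
  "reduction_assumption Q \<longleftrightarrow> (\<forall>N \<psi> U j K k i.
     sym_form Q N \<psi> \<longrightarrow> is_rep Q U \<longrightarrow> isotropic Q N \<psi> U j \<longrightarrow>
     is_kernel Q N (rcomp (dual_mor Q j) \<psi>) K k \<longrightarrow> rep_mor Q U K i \<longrightarrow> rcomp k i = j \<longrightarrow>
     (let Nq = quot Q K i; \<pi> = quot_map K i in
       (\<exists>\<psi>'. sym_form Q Nq \<psi>' \<and>
          rcomp (dual_mor Q k) (rcomp \<psi> k) = rcomp (dual_mor Q \<pi>) (rcomp \<psi>' \<pi>)) \<and>
       (\<forall>\<psi>1 \<psi>2. sym_form Q Nq \<psi>1 \<longrightarrow> sym_form Q Nq \<psi>2 \<longrightarrow>
          rcomp (dual_mor Q k) (rcomp \<psi> k) = rcomp (dual_mor Q \<pi>) (rcomp \<psi>1 \<pi>) \<longrightarrow>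
          rcomp (dual_mor Q k) (rcomp \<psi> k) = rcomp (dual_mor Q \<pi>) (rcomp \<psi>2 \<pi>) \<longrightarrow>
          (\<exists>\<phi>. rep_iso Q Nq Nq \<phi> \<and> rcomp (dual_mor Q \<phi>) (rcomp \<psi>2 \<phi>) = \<psi>1))))"

end

theory Submission
  imports Defs
begin


lemma kcomp_Some: "kcomp g f x = Some z \<longleftrightarrow> (\<exists>y. f x = Some y \<and> g y = Some z)"
  by (cases "f x") (auto simp: kcomp_def)

lemma kcomp_None: "kcomp g f x = None \<longleftrightarrow> (\<forall>y. f x = Some y \<longrightarrow> g y = None)"
  by (cases "f x") (auto simp: kcomp_def)

lemma kcomp_apply: "kcomp g f x = (case f x of None \<Rightarrow> None | Some y \<Rightarrow> g y)"
  by (cases "f x") (auto simp: kcomp_def)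

lemma kcomp_assoc: "kcomp h (kcomp g f) = kcomp (kcomp h g) f"
  by (rule ext) (simp add: kcomp_apply split: option.splits)

lemma rcomp_assoc: "rcomp h (rcomp g f) = rcomp (rcomp h g) f"
  by (simp add: rcomp_def kcomp_assoc)

lemma injD: "inj_on f (dom f) \<Longrightarrow> f x = Some y \<Longrightarrow> f x' = Some y \<Longrightarrow> x = x'"
  by (auto simp: inj_on_def dom_def)

lemma f1_morI:
  assumes "\<And>x y. f x = Some y \<Longrightarrow> x \<in> V \<and> y \<in> W"
    and "\<And>x x' y. f x = Some y \<Longrightarrow> f x' = Some y \<Longrightarrow> x = x'"
  shows "f1_mor V W f"
  unfolding f1_mor_def
proof (intro conjI subsetI inj_onI)
  fix x assume "x \<in> dom f" then obtain y where "f x = Some y" by auto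
  then show "x \<in> V" using assms(1) by blast
next
  fix y assume "y \<in> ran f" then obtain x where "f x = Some y" by (auto simp: ran_def)
  then show "y \<in> W" using assms(1) by blast
next
  fix x x' assume "x \<in> dom f" "f x = f x'"
  then obtain y where y: "f x = Some y" using domD by metis
  then have "f x' = Some y" using \<open>f x = f x'\<close> by simp
  then show "x = x'" using assms(2) y by blast
qed

lemma f1_morD:
  assumes "f1_mor V W f"
  shows "f x = Some y \<Longrightarrow> x \<in> V" "f x = Some y \<Longrightarrow> y \<in> W"
    "f x = Some y \<Longrightarrow> f x' = Some y \<Longrightarrow> x = x'" "x \<notin> V \<Longrightarrow> f x = None"
    "inj_on f (dom f)"
proof -
  have d: "dom f \<subseteq> V" and r: "ran f \<subseteq> W" and i: "inj_on f (dom f)"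
    using assms unfolding f1_mor_def by auto
  show "f x = Some y \<Longrightarrow> x \<in> V" using d by auto
  show "f x = Some y \<Longrightarrow> y \<in> W" using r by (auto simp: ran_def)
  show "f x = Some y \<Longrightarrow> f x' = Some y \<Longrightarrow> x = x'" using i by (auto simp: inj_on_def dom_def)
  show "x \<notin> V \<Longrightarrow> f x = None" using d by auto
  show "inj_on f (dom f)" by (rule i)
qed

lemma transp_Some:
  assumes "inj_on f (dom f)"
  shows "transp f w = Some v \<longleftrightarrow> f v = Some w"
proof
  assume h: "transp f w = Some v"
  then have "w \<in> ran f" by (auto simp: transp_def split: if_splits)
  then obtain v0 where v0: "f v0 = Some w" by (auto simp: ran_def)
  have "(THE v. f v = Some w) = v0"
    using v0 injD[OF assms] by blast
  then show "f v = Some w" using h v0 by (auto simp: transp_def split: if_splits)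
next
  assume h: "f v = Some w"
  then have "w \<in> ran f" by (auto simp: ran_def)
  moreover have "(THE v. f v = Some w) = v"
    using h injD[OF assms] by blast
  ultimately show "transp f w = Some v" by (simp add: transp_def)
qed

lemma transp_None: "transp f w = None \<longleftrightarrow> (\<forall>v. f v \<noteq> Some w)"
  by (auto simp: transp_def ran_def)

lemma rep_morD:
  assumes "rep_mor Q R S \<phi>"
  shows "f1_mor (fst R i) (fst S i) (\<phi> i)"
    "kcomp (\<phi> (tgt Q a)) (snd R a) x = kcomp (snd S a) (\<phi> (src Q a)) x"
  using assms unfolding rep_mor_def by metis+

lemma rep_morD3:
  assumes "rep_mor Q R S \<phi>"
  shows "kcomp (\<phi> (tgt Q a)) (snd R a) = kcomp (snd S a) (\<phi> (src Q a))"
  using assms unfolding rep_mor_def by metis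

lemma is_repD:
  assumes "is_rep Q R"
  shows "f1_mor (fst R (src Q a)) (fst R (tgt Q a)) (snd R a)" "finite (fst R i)"
    "finite {i. fst R i \<noteq> {}}"
  using assms unfolding is_rep_def by auto

lemma option_eqI: "(\<And>v. x = Some v \<longleftrightarrow> y = Some v) \<Longrightarrow> x = y"
  by (cases x; cases y) auto

lemma rep_mor_comp:
  assumes "rep_mor Q R S f" "rep_mor Q S T g"
  shows "rep_mor Q R T (rcomp g f)"
  unfolding rep_mor_def
proof (intro conjI allI)
  fix i show "f1_mor (fst R i) (fst T i) (rcomp g f i)"
    using f1_morD[OF rep_morD(1)[OF assms(1), of i]] f1_morD[OF rep_morD(1)[OF assms(2), of i]]
    by (intro f1_morI) (auto simp: rcomp_def kcomp_Some)
next
  fix a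
  have "kcomp (rcomp g f (tgt Q a)) (snd R a) = kcomp (g (tgt Q a)) (kcomp (f (tgt Q a)) (snd R a))"
    by (simp add: rcomp_def kcomp_assoc)
  also have "kcomp (f (tgt Q a)) (snd R a) = kcomp (snd S a) (f (src Q a))"
    using rep_morD(2)[OF assms(1)] by blast
  also have "kcomp (g (tgt Q a)) (kcomp (snd S a) (f (src Q a))) = kcomp (kcomp (snd T a) (g (src Q a))) (f (src Q a))"
    using rep_morD3[OF assms(2)] by (simp add: kcomp_assoc)
  finally show "kcomp (rcomp g f (tgt Q a)) (snd R a) = kcomp (snd T a) (rcomp g f (src Q a))"
    by (simp add: rcomp_def kcomp_assoc)
qed

lemma rid_rep_mor:
  assumes "is_rep Q R"
  shows "rep_mor Q R R (rid R)"
  unfolding rep_mor_def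
proof (intro conjI allI)
  fix i show "f1_mor (fst R i) (fst R i) (rid R i)"
    by (intro f1_morI) (auto simp: rid_def split: if_splits)
next
  fix a
  show "kcomp (rid R (tgt Q a)) (snd R a) = kcomp (snd R a) (rid R (src Q a))"
    using f1_morD[OF is_repD(1)[OF assms, of a]]
    by (intro ext) (auto simp: kcomp_apply rid_def split: option.splits)
qed

lemma bij_iso:
  assumes R: "is_rep Q R" and S: "is_rep Q S" and al: "rep_mor Q R S \<alpha>"
    and dom: "\<And>i x. x \<in> fst R i \<Longrightarrow> \<alpha> i x \<noteq> None"
    and sur: "\<And>i y. y \<in> fst S i \<Longrightarrow> \<exists>x. \<alpha> i x = Some y"
  shows "rep_iso Q R S \<alpha>"
proof -
  note am = f1_morD[OF rep_morD(1)[OF al]]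
  have inj: "inj_on (\<alpha> i) (dom (\<alpha> i))" for i by (rule am(5))
  note tS = transp_Some[OF inj]
  define \<beta> where "\<beta> = (\<lambda>i. transp (\<alpha> i))"
  have "rep_mor Q S R \<beta>"
    unfolding rep_mor_def
  proof (intro conjI allI)
    fix i show "f1_mor (fst S i) (fst R i) (\<beta> i)"
      by (intro f1_morI) (auto simp: \<beta>_def tS am)
  next
    fix a
    show "kcomp (\<beta> (tgt Q a)) (snd S a) = kcomp (snd R a) (\<beta> (src Q a))"
    proof (rule ext)
      fix y
      show "kcomp (\<beta> (tgt Q a)) (snd S a) y = kcomp (snd R a) (\<beta> (src Q a)) y"
      proof (cases "y \<in> fst S (src Q a)")
        case False
        then have "snd S a y = None" using f1_morD(4)[OF is_repD(1)[OF S]] by blast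
        moreover have "\<beta> (src Q a) y = None"
          using False am(2) by (auto simp: \<beta>_def transp_None)
        ultimately show ?thesis by (simp add: kcomp_apply)
      next
        case True
        obtain x where x: "\<alpha> (src Q a) x = Some y" using sur[OF True] by blast
        have bx: "\<beta> (src Q a) y = Some x" using x by (simp add: \<beta>_def tS)
        have c: "kcomp (\<alpha> (tgt Q a)) (snd R a) x = snd S a y"
          using rep_morD(2)[OF al, of a x] x by (simp add: kcomp_apply)
        show ?thesis
        proof (cases "snd R a x")
          case None
          then show ?thesis using c bx by (simp add: kcomp_apply)
        next
          case (Some x')
          have "x' \<in> fst R (tgt Q a)" using Some f1_morD(2)[OF is_repD(1)[OF R]] by blast
          then obtain y' where y': "\<alpha> (tgt Q a) x' = Some y'" using dom by blast
          then have "snd S a y = Some y'" using c Some by (simp add: kcomp_apply)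
          moreover have "\<beta> (tgt Q a) y' = Some x'" using y' by (simp add: \<beta>_def tS)
          ultimately show ?thesis using bx Some by (simp add: kcomp_apply)
        qed
      qed
    qed
  qed
  moreover have "rcomp \<beta> \<alpha> = rid R"
  proof (intro ext)
    fix i x
    show "rcomp \<beta> \<alpha> i x = rid R i x"
    proof (cases "x \<in> fst R i")
      case True
      then obtain y where "\<alpha> i x = Some y" using dom by blast
      then show ?thesis using True by (simp add: rcomp_def kcomp_apply rid_def \<beta>_def tS)
    next
      case False
      then show ?thesis using am(4) by (simp add: rcomp_def kcomp_apply rid_def)
    qed
  qed
  moreover have "rcomp \<alpha> \<beta> = rid S"
  proof (intro ext)
    fix i y
    show "rcomp \<alpha> \<beta> i y = rid S i y"
    proof (cases "y \<in> fst S i")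
      case True
      then obtain x where x: "\<alpha> i x = Some y" using sur by blast
      then have "\<beta> i y = Some x" by (simp add: \<beta>_def tS)
      then show ?thesis using True x by (simp add: rcomp_def kcomp_apply rid_def)
    next
      case False
      then have "\<beta> i y = None" using am(2) by (auto simp: \<beta>_def transp_None)
      then show ?thesis using False by (simp add: rcomp_def kcomp_apply rid_def)
    qed
  qed
  ultimately show ?thesis using al unfolding rep_iso_def by blast
qed



lemma sum_map_even: "sum_map f g (2*n) = map_option (\<lambda>n. 2 * n) (f n)"
  by (simp add: sum_map_def)
lemma sum_map_odd: "sum_map f g (2*n+1) = map_option (\<lambda>n. 2 * n + 1) (g n)"
  by (simp add: sum_map_def)

lemma sum_map_odd'[simp]: "sum_map f g (Suc (2*n)) = map_option (\<lambda>n. 2 * n + 1) (g n)"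
  using sum_map_odd by simp

lemma sum_map_even'[simp]: "sum_map f g (2*n) = map_option (\<lambda>n. 2 * n) (f n)"
  by (rule sum_map_even)

lemma par1[simp]: "Suc (2*a) \<noteq> 2*(b::nat)" by presburger
lemma par2[simp]: "2*a \<noteq> Suc (2*(b::nat))" by presburger

lemma sum_map_Some: "sum_map f g x = Some y \<longleftrightarrow>
   (\<exists>n m. x = 2*n \<and> y = 2*m \<and> f n = Some m) \<or> (\<exists>n m. x = 2*n+1 \<and> y = 2*m+1 \<and> g n = Some m)"
proof (cases "even x")
  case True
  then obtain n where "x = 2*n" by (auto elim: evenE)
  then show ?thesis by auto
next
  case False
  then obtain n where "x = 2*n+1" by (auto elim: oddE)
  then show ?thesis by auto
qed

lemma even_odd_split: "(\<And>n. (x::nat) = 2*n \<Longrightarrow> P) \<Longrightarrow> (\<And>n. x = 2*n+1 \<Longrightarrow> P) \<Longrightarrow> P"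
  by (metis oddE evenE)

lemma fst_rsum: "fst (rsum R S) i = (\<lambda>n. 2 * n) ` fst R i \<union> (\<lambda>n. 2 * n + 1) ` fst S i"
  by (simp add: rsum_def)
lemma snd_rsum: "snd (rsum R S) a = sum_map (snd R a) (snd S a)"
  by (simp add: rsum_def)

lemma mem_rsum_even[simp]: "2*n \<in> fst (rsum R S) i \<longleftrightarrow> n \<in> fst R i"
  by (auto simp: fst_rsum)
lemma mem_rsum_odd: "2*n+1 \<in> fst (rsum R S) i \<longleftrightarrow> n \<in> fst S i"
  by (auto simp: fst_rsum)
lemma mem_rsum_odd'[simp]: "Suc (2*n) \<in> fst (rsum R S) i \<longleftrightarrow> n \<in> fst S i"
  by (auto simp: fst_rsum)

lemma is_rep_rsum:
  assumes "is_rep Q R" "is_rep Q S"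
  shows "is_rep Q (rsum R S)"
  unfolding is_rep_def
proof (intro conjI allI)
  have "{i. fst (rsum R S) i \<noteq> {}} \<subseteq> {i. fst R i \<noteq> {}} \<union> {i. fst S i \<noteq> {}}"
    by (auto simp: fst_rsum)
  then show "finite {i. fst (rsum R S) i \<noteq> {}}"
    using is_repD(3)[OF assms(1)] is_repD(3)[OF assms(2)] by (meson finite_UnI finite_subset)
next
  fix i show "finite (fst (rsum R S) i)"
    using is_repD(2)[OF assms(1)] is_repD(2)[OF assms(2)] by (simp add: fst_rsum)
next
  fix a
  note r = f1_morD[OF is_repD(1)[OF assms(1), of a]]
  note s = f1_morD[OF is_repD(1)[OF assms(2), of a]]
  show "f1_mor (fst (rsum R S) (src Q a)) (fst (rsum R S) (tgt Q a)) (snd (rsum R S) a)"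
  proof (rule f1_morI)
    fix x y assume "snd (rsum R S) a x = Some y"
    then show "x \<in> fst (rsum R S) (src Q a) \<and> y \<in> fst (rsum R S) (tgt Q a)"
      using r s by (auto simp: snd_rsum sum_map_Some mem_rsum_even mem_rsum_odd)
  next
    fix x x' y assume "snd (rsum R S) a x = Some y" "snd (rsum R S) a x' = Some y"
    then show "x = x'"
      using r(3) s(3) by (auto simp: snd_rsum sum_map_Some)
  qed
qed

lemma combinatorial_holds: "combinatorial Q"
  unfolding combinatorial_def
proof (intro allI impI)
  fix U X1 X2 j
  assume U: "is_rep Q U" and X1: "is_rep Q X1" and X2: "is_rep Q X2"
    and inf: "inflation Q U (rsum X1 X2) j"
  have jm: "rep_mor Q U (rsum X1 X2) j" and jd: "\<And>i. dom (j i) = fst U i"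
    using inf by (auto simp: inflation_def)
  note jf = f1_morD[OF rep_morD(1)[OF jm]]
  have jc: "kcomp (j (tgt Q a)) (snd U a) x = kcomp (sum_map (snd X1 a) (snd X2 a)) (j (src Q a)) x" for a x
    using rep_morD(2)[OF jm] by (simp add: snd_rsum)
  define A1 where "A1 = (\<lambda>i. {n. \<exists>x. j i x = Some (2*n)})"
  define A2 where "A2 = (\<lambda>i. {n. \<exists>x. j i x = Some (2*n+1)})"
  define U1 where "U1 = (A1, \<lambda>a n. if n \<in> A1 (src Q a) then snd X1 a n else None)"
  define U2 where "U2 = (A2, \<lambda>a n. if n \<in> A2 (src Q a) then snd X2 a n else None)"
  define j1 where "j1 = (\<lambda>i n. if n \<in> A1 i then Some n else (None :: nat option))"
  define j2 where "j2 = (\<lambda>i n. if n \<in> A2 i then Some n else (None :: nat option))"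
  have A1X: "A1 i \<subseteq> fst X1 i" for i
    using jf(2) by (auto simp: A1_def) (metis mem_rsum_even)
  have A2X: "A2 i \<subseteq> fst X2 i" for i
    using jf(2) by (auto simp: A2_def) (metis mem_rsum_odd')
  have A1U: "A1 i \<noteq> {} \<Longrightarrow> fst U i \<noteq> {}" for i
    using jf(1) by (auto simp: A1_def)
  have A2U: "A2 i \<noteq> {} \<Longrightarrow> fst U i \<noteq> {}" for i
    using jf(1) by (auto simp: A2_def)
  have cl1: "m \<in> A1 (tgt Q a)" if n1: "n \<in> A1 (src Q a)" and n2: "snd X1 a n = Some m" for a n m
  proof -
    obtain x where x: "j (src Q a) x = Some (2*n)" using n1 by (auto simp: A1_def)
    have "kcomp (j (tgt Q a)) (snd U a) x = Some (2*m)"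
      using jc[of a x] x n2 by (simp add: kcomp_apply sum_map_even)
    then show ?thesis by (auto simp: kcomp_Some A1_def)
  qed
  have cl2: "m \<in> A2 (tgt Q a)" if n1: "n \<in> A2 (src Q a)" and n2: "snd X2 a n = Some m" for a n m
  proof -
    obtain x where x: "j (src Q a) x = Some (2*n+1)" using n1 by (auto simp: A2_def)
    have "kcomp (j (tgt Q a)) (snd U a) x = Some (2*m+1)"
      using jc[of a x] x n2 by (simp add: kcomp_apply sum_map_odd)
    then show ?thesis by (auto simp: kcomp_Some A2_def)
  qed
  have U1r: "is_rep Q U1"
    unfolding is_rep_def U1_def fst_conv snd_conv
  proof (intro conjI allI)
    show "finite {i. A1 i \<noteq> {}}"
      using is_repD(3)[OF U] A1U by (metis (mono_tags, lifting) finite_subset mem_Collect_eq subsetI)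
    show "finite (A1 i)" for i using is_repD(2)[OF X1] A1X finite_subset by metis
    fix a
    note r = f1_morD[OF is_repD(1)[OF X1, of a]]
    show "f1_mor (A1 (src Q a)) (A1 (tgt Q a)) (\<lambda>n. if n \<in> A1 (src Q a) then snd X1 a n else None)"
      by (rule f1_morI) (auto split: if_splits intro: cl1 r(3))
  qed
  have U2r: "is_rep Q U2"
    unfolding is_rep_def U2_def fst_conv snd_conv
  proof (intro conjI allI)
    show "finite {i. A2 i \<noteq> {}}"
      using is_repD(3)[OF U] A2U by (metis (mono_tags, lifting) finite_subset mem_Collect_eq subsetI)
    show "finite (A2 i)" for i using is_repD(2)[OF X2] A2X finite_subset by metis
    fix a
    note r = f1_morD[OF is_repD(1)[OF X2, of a]]
    show "f1_mor (A2 (src Q a)) (A2 (tgt Q a)) (\<lambda>n. if n \<in> A2 (src Q a) then snd X2 a n else None)"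
      by (rule f1_morI) (auto split: if_splits intro: cl2 r(3))
  qed
  have inf1: "inflation Q U1 X1 j1"
    unfolding inflation_def rep_mor_def
  proof (intro conjI allI)
    fix i show "f1_mor (fst U1 i) (fst X1 i) (j1 i)"
      using A1X by (intro f1_morI) (auto simp: U1_def j1_def split: if_splits)
    show "dom (j1 i) = fst U1 i" by (auto simp: U1_def j1_def split: if_splits)
  next
    fix a show "kcomp (j1 (tgt Q a)) (snd U1 a) = kcomp (snd X1 a) (j1 (src Q a))"
      by (intro ext) (auto simp: U1_def j1_def kcomp_apply cl1 split: option.splits)
  qed
  have inf2: "inflation Q U2 X2 j2"
    unfolding inflation_def rep_mor_def
  proof (intro conjI allI)
    fix i show "f1_mor (fst U2 i) (fst X2 i) (j2 i)"
      using A2X by (intro f1_morI) (auto simp: U2_def j2_def split: if_splits)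
    show "dom (j2 i) = fst U2 i" by (auto simp: U2_def j2_def split: if_splits)
  next
    fix a show "kcomp (j2 (tgt Q a)) (snd U2 a) = kcomp (snd X2 a) (j2 (src Q a))"
      by (intro ext) (auto simp: U2_def j2_def kcomp_apply cl2 split: option.splits)
  qed
  have jval: "y \<in> fst (rsum U1 U2) i" if "j i x = Some y" for i x y
  proof (rule even_odd_split[of y])
    fix n assume "y = 2*n" then show ?thesis using that by (auto simp: mem_rsum_even U1_def A1_def)
  next
    fix n assume "y = 2*n+1" then show ?thesis using that by (auto simp: mem_rsum_odd U2_def A2_def)
  qed
  have jm': "rep_mor Q U (rsum U1 U2) j"
    unfolding rep_mor_def
  proof (intro conjI allI)
    fix i show "f1_mor (fst U i) (fst (rsum U1 U2) i) (j i)"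
      using jf jval by (intro f1_morI) blast+
  next
    fix a show "kcomp (j (tgt Q a)) (snd U a) = kcomp (snd (rsum U1 U2) a) (j (src Q a))"
    proof (rule ext)
      fix x
      have "kcomp (sum_map (snd X1 a) (snd X2 a)) (j (src Q a)) x
          = kcomp (sum_map (snd U1 a) (snd U2 a)) (j (src Q a)) x"
      proof (cases "j (src Q a) x")
        case None then show ?thesis by (simp add: kcomp_apply)
      next
        case (Some y)
        show ?thesis
        proof (rule even_odd_split[of y])
          fix n assume "y = 2*n"
          then have "n \<in> A1 (src Q a)" using Some by (auto simp: A1_def)
          then show ?thesis using Some \<open>y = 2*n\<close> by (simp add: kcomp_apply sum_map_even U1_def)
        next
          fix n assume "y = 2*n+1"
          then have "n \<in> A2 (src Q a)" using Some by (auto simp: A2_def)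
          then show ?thesis using Some \<open>y = 2*n+1\<close> by (simp add: kcomp_apply sum_map_odd U2_def)
        qed
      qed
      then show "kcomp (j (tgt Q a)) (snd U a) x = kcomp (snd (rsum U1 U2) a) (j (src Q a)) x"
        using jc[of a x] by (simp add: snd_rsum)
    qed
  qed
  have iso: "rep_iso Q U (rsum U1 U2) j"
  proof (rule bij_iso[OF U is_rep_rsum[OF U1r U2r] jm'])
    fix i x assume "x \<in> fst U i" then show "j i x \<noteq> None" using jd by auto
  next
    fix i y assume "y \<in> fst (rsum U1 U2) i"
    then show "\<exists>x. j i x = Some y"
      by (auto simp: fst_rsum U1_def U2_def A1_def A2_def)
  qed
  have eq: "j = rcomp (msum j1 j2) j"
  proof (intro ext)
    fix i x
    show "j i x = rcomp (msum j1 j2) j i x"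
    proof (cases "j i x")
      case None then show ?thesis by (simp add: rcomp_def kcomp_apply)
    next
      case (Some y)
      show ?thesis
      proof (rule even_odd_split[of y])
        fix n assume "y = 2*n"
        then have "n \<in> A1 i" using Some by (auto simp: A1_def)
        then show ?thesis using Some \<open>y = 2*n\<close>
          by (simp add: rcomp_def msum_def kcomp_apply sum_map_even j1_def)
      next
        fix n assume "y = 2*n+1"
        then have "n \<in> A2 i" using Some by (auto simp: A2_def)
        then show ?thesis using Some \<open>y = 2*n+1\<close>
          by (simp add: rcomp_def msum_def kcomp_apply sum_map_odd j2_def)
      qed
    qed
  qed
  show "\<exists>U1 U2 j1 j2 f. is_rep Q U1 \<and> is_rep Q U2 \<and> inflation Q U1 X1 j1 \<and>
        inflation Q U2 X2 j2 \<and> rep_iso Q U (rsum U1 U2) f \<and> j = rcomp (msum j1 j2) f"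
    using U1r U2r inf1 inf2 iso eq by blast
qed



definition restr :: "('v, 'e) quiver \<Rightarrow> ('v, 'e) rep \<Rightarrow> ('v \<Rightarrow> nat set) \<Rightarrow> ('v, 'e) rep" where
  "restr Q W T = (T, \<lambda>a x. if x \<in> T (src Q a) then
      (case snd W a x of None \<Rightarrow> None | Some y \<Rightarrow> if y \<in> T (tgt Q a) then Some y else None) else None)"

lemma is_rep_restr:
  assumes W: "is_rep Q W" and T: "\<And>i. T i \<subseteq> fst W i"
  shows "is_rep Q (restr Q W T)"
  unfolding is_rep_def restr_def fst_conv snd_conv
proof (intro conjI allI)
  show "finite {i. T i \<noteq> {}}"
    using is_repD(3)[OF W] T by (metis (mono_tags, lifting) finite_subset mem_Collect_eq subsetI subset_empty)
  show "finite (T i)" for i using is_repD(2)[OF W] T finite_subset by metis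
  fix a
  note r = f1_morD[OF is_repD(1)[OF W, of a]]
  show "f1_mor (T (src Q a)) (T (tgt Q a)) (\<lambda>x. if x \<in> T (src Q a) then
      (case snd W a x of None \<Rightarrow> None | Some y \<Rightarrow> if y \<in> T (tgt Q a) then Some y else None) else None)"
    by (rule f1_morI) (auto split: if_splits option.splits intro: r(3))
qed

lemma finite_subfamilies:
  assumes W: "is_rep Q W"
  shows "finite {T. \<forall>i. T i \<subseteq> fst W i}"
proof -
  define F where "F = {i. fst W i \<noteq> {}}"
  have fF: "finite F" using is_repD(3)[OF W] by (simp add: F_def)
  have fS: "finite (Sigma F (fst W))" using fF is_repD(2)[OF W] by (intro finite_SigmaI) auto
  have "(\<lambda>T. Sigma UNIV T) ` {T. \<forall>i. T i \<subseteq> fst W i} \<subseteq> Pow (Sigma F (fst W))"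
    by (auto simp: F_def)
  then have "finite ((\<lambda>T. Sigma UNIV T) ` {T. \<forall>i. T i \<subseteq> fst W i})"
    using fS by (meson finite_Pow_iff finite_subset)
  moreover have "inj_on (\<lambda>T. Sigma UNIV T) {T. \<forall>i. T i \<subseteq> fst W i}"
    by (rule inj_onI) (auto simp: fun_eq_iff set_eq_iff)
  ultimately show ?thesis using finite_imageD by blast
qed

lemma split_iso:
  assumes U: "is_rep Q U" and V: "is_rep Q V" and W: "is_rep Q W"
    and iso: "risom Q (rsum U V) W"
  shows "\<exists>T. (\<forall>i. T i \<subseteq> fst W i) \<and> risom Q U (restr Q W T) \<and> risom Q V (restr Q W (\<lambda>i. fst W i - T i))"
proof -
  obtain \<phi> \<phi>' where pm: "rep_mor Q (rsum U V) W \<phi>" and pm': "rep_mor Q W (rsum U V) \<phi>'"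
    and c1: "rcomp \<phi>' \<phi> = rid (rsum U V)" and c2: "rcomp \<phi> \<phi>' = rid W"
    using iso unfolding risom_def rep_iso_def by blast
  note pf = f1_morD[OF rep_morD(1)[OF pm]]
  have pdom: "\<phi> i x \<noteq> None" if "x \<in> fst (rsum U V) i" for i x
  proof -
    have "rcomp \<phi>' \<phi> i x = Some x" using c1 that by (simp add: rid_def)
    then show ?thesis by (cases "\<phi> i x") (auto simp: rcomp_def kcomp_apply)
  qed
  have pran: "\<exists>x. \<phi> i x = Some y" if "y \<in> fst W i" for i y
  proof -
    have "rcomp \<phi> \<phi>' i y = Some y" using c2 that by (simp add: rid_def)
    then show ?thesis by (auto simp: rcomp_def kcomp_Some)
  qed
  have pc: "kcomp (\<phi> (tgt Q a)) (sum_map (snd U a) (snd V a)) x = kcomp (snd W a) (\<phi> (src Q a)) x" for a x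
    using rep_morD(2)[OF pm, of a x] by (simp add: snd_rsum)
  define T where "T = (\<lambda>i. {y. \<exists>x\<in>fst U i. \<phi> i (2*x) = Some y})"
  define T' where "T' = (\<lambda>i. fst W i - T i)"
  have TW: "T i \<subseteq> fst W i" for i using pf(2) by (auto simp: T_def)
  have notT: "\<phi> i (2*x+1) \<noteq> Some y \<or> y \<notin> T i" for i x y
    using pf(3) by (auto simp: T_def) (metis par1)
  define \<alpha> where "\<alpha> = (\<lambda>i x. if x \<in> fst U i then \<phi> i (2*x) else None)"
  define \<beta> where "\<beta> = (\<lambda>i x. if x \<in> fst V i then \<phi> i (2*x+1) else None)"
  note uf = is_repD(1)[OF U, THEN f1_morD(4)]
  note vf = is_repD(1)[OF V, THEN f1_morD(4)]
  note uf2 = is_repD(1)[OF U, THEN f1_morD(2)]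
  note vf2 = is_repD(1)[OF V, THEN f1_morD(2)]
  have am: "rep_mor Q U (restr Q W T) \<alpha>"
    unfolding rep_mor_def
  proof (intro conjI allI)
    fix i show "f1_mor (fst U i) (fst (restr Q W T) i) (\<alpha> i)"
    proof (rule f1_morI)
      fix x y assume "\<alpha> i x = Some y" then show "x \<in> fst U i \<and> y \<in> fst (restr Q W T) i"
        by (auto simp: \<alpha>_def restr_def T_def split: if_splits)
    next
      fix x x' y assume "\<alpha> i x = Some y" "\<alpha> i x' = Some y" then show "x = x'"
        using pf(3) by (auto simp: \<alpha>_def split: if_splits) fastforce
    qed
  next
    fix a show "kcomp (\<alpha> (tgt Q a)) (snd U a) = kcomp (snd (restr Q W T) a) (\<alpha> (src Q a))"
    proof (rule ext)
      fix x show "kcomp (\<alpha> (tgt Q a)) (snd U a) x = kcomp (snd (restr Q W T) a) (\<alpha> (src Q a)) x"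
      proof (cases "x \<in> fst U (src Q a)")
        case False then show ?thesis using uf[of x a] by (simp add: kcomp_apply \<alpha>_def)
      next
        case True
        then obtain y where y: "\<phi> (src Q a) (2*x) = Some y" using pdom by fastforce
        have yT: "y \<in> T (src Q a)" using y True by (auto simp: T_def)
        have e: "snd W a y = (case snd U a x of None \<Rightarrow> None | Some x' \<Rightarrow> \<phi> (tgt Q a) (2*x'))"
          using pc[of a "2*x"] y by (simp add: kcomp_apply split: option.splits)
        show ?thesis
        proof (cases "snd U a x")
          case None then show ?thesis using True y yT e by (simp add: kcomp_apply \<alpha>_def restr_def)
        next
          case (Some x')
          then have x': "x' \<in> fst U (tgt Q a)" using uf2 by blast
          then obtain z where z: "\<phi> (tgt Q a) (2*x') = Some z" using pdom by fastforce
          then have "z \<in> T (tgt Q a)" using x' by (auto simp: T_def)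
          then show ?thesis using True y yT e Some x' z by (simp add: kcomp_apply \<alpha>_def restr_def)
        qed
      qed
    qed
  qed
  have bm: "rep_mor Q V (restr Q W T') \<beta>"
    unfolding rep_mor_def
  proof (intro conjI allI)
    fix i show "f1_mor (fst V i) (fst (restr Q W T') i) (\<beta> i)"
    proof (rule f1_morI)
      fix x y assume "\<beta> i x = Some y" then show "x \<in> fst V i \<and> y \<in> fst (restr Q W T') i"
        using pf(2) notT by (auto simp: \<beta>_def restr_def T'_def split: if_splits)
    next
      fix x x' y assume "\<beta> i x = Some y" "\<beta> i x' = Some y" then show "x = x'"
        using pf(3) by (auto simp: \<beta>_def split: if_splits) fastforce
    qed
  next
    fix a show "kcomp (\<beta> (tgt Q a)) (snd V a) = kcomp (snd (restr Q W T') a) (\<beta> (src Q a))"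
    proof (rule ext)
      fix x show "kcomp (\<beta> (tgt Q a)) (snd V a) x = kcomp (snd (restr Q W T') a) (\<beta> (src Q a)) x"
      proof (cases "x \<in> fst V (src Q a)")
        case False then show ?thesis using vf[of x a] by (simp add: kcomp_apply \<beta>_def)
      next
        case True
        then obtain y where y: "\<phi> (src Q a) (2*x+1) = Some y" using pdom
          by (metis mem_rsum_odd not_None_eq)
        have yT: "y \<in> T' (src Q a)" using y True notT pf(2) by (auto simp: T'_def)
        have e: "snd W a y = (case snd V a x of None \<Rightarrow> None | Some x' \<Rightarrow> \<phi> (tgt Q a) (2*x'+1))"
          using pc[of a "2*x+1"] y by (simp add: kcomp_apply split: option.splits)
        show ?thesis
        proof (cases "snd V a x")
          case None then show ?thesis using True y yT e by (simp add: kcomp_apply \<beta>_def restr_def)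
        next
          case (Some x')
          then have x': "x' \<in> fst V (tgt Q a)" using vf2 by blast
          then obtain z where z: "\<phi> (tgt Q a) (2*x'+1) = Some z" using pdom
            by (metis mem_rsum_odd not_None_eq)
          then have "z \<in> T' (tgt Q a)" using x' notT pf(2) by (auto simp: T'_def)
          then show ?thesis using True y yT e Some x' z by (simp add: kcomp_apply \<beta>_def restr_def)
        qed
      qed
    qed
  qed
  have T'W: "T' i \<subseteq> fst W i" for i by (auto simp: T'_def)
  have isoa: "rep_iso Q U (restr Q W T) \<alpha>"
  proof (rule bij_iso[OF U is_rep_restr[OF W TW] am])
    fix i x assume "x \<in> fst U i" then show "\<alpha> i x \<noteq> None" using pdom by (simp add: \<alpha>_def)
  next
    fix i y assume "y \<in> fst (restr Q W T) i" then show "\<exists>x. \<alpha> i x = Some y"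
      by (auto simp: restr_def T_def \<alpha>_def)
  qed
  have isob: "rep_iso Q V (restr Q W T') \<beta>"
  proof (rule bij_iso[OF V is_rep_restr[OF W T'W] bm])
    fix i x assume "x \<in> fst V i" then show "\<beta> i x \<noteq> None" using pdom
      by (simp add: \<beta>_def)
  next
    fix i y assume "y \<in> fst (restr Q W T') i"
    then have y: "y \<in> fst W i" "y \<notin> T i" by (auto simp: restr_def T'_def)
    then obtain z where z: "\<phi> i z = Some y" using pran by blast
    then have zr: "z \<in> fst (rsum U V) i" using pf(1) by blast
    show "\<exists>x. \<beta> i x = Some y"
    proof (rule even_odd_split[of z])
      fix n assume "z = 2*n" then show ?thesis using zr z y by (auto simp: T_def)
    next
      fix n assume "z = 2*n+1" then show ?thesis using zr z
        by (auto simp: \<beta>_def mem_rsum_odd)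
    qed
  qed
  show ?thesis using TW isoa isob unfolding risom_def T'_def by blast
qed

lemma fdd_holds: "finite_direct_decomposition Q"
  unfolding finite_direct_decomposition_def
proof (intro allI impI)
  fix W assume W: "is_rep Q W"
  define TT where "TT = {T. \<forall>i. T i \<subseteq> fst W i}"
  define S where "S = (\<lambda>T. (restr Q W T, restr Q W (\<lambda>i. fst W i - T i))) ` TT"
  have "finite S" using finite_subfamilies[OF W] by (simp add: S_def TT_def)
  moreover have "\<forall>(U, V) \<in> S. is_rep Q U \<and> is_rep Q V"
    using is_rep_restr[OF W] by (auto simp: S_def TT_def)
  moreover have "\<forall>U V. is_rep Q U \<longrightarrow> is_rep Q V \<longrightarrow> risom Q (rsum U V) W \<longrightarrow>
           (\<exists>(U', V') \<in> S. risom Q U U' \<and> risom Q V V')"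
  proof (intro allI impI)
    fix U V assume "is_rep Q U" "is_rep Q V" "risom Q (rsum U V) W"
    then obtain T where "\<forall>i. T i \<subseteq> fst W i" "risom Q U (restr Q W T)"
      "risom Q V (restr Q W (\<lambda>i. fst W i - T i))" using split_iso W by blast
    then show "\<exists>(U', V') \<in> S. risom Q U U' \<and> risom Q V V'"
      by (auto simp: S_def TT_def)
  qed
  ultimately show "\<exists>S. finite S \<and> (\<forall>(U, V) \<in> S. is_rep Q U \<and> is_rep Q V) \<and>
        (\<forall>U V. is_rep Q U \<longrightarrow> is_rep Q V \<longrightarrow> risom Q (rsum U V) W \<longrightarrow>
           (\<exists>(U', V') \<in> S. risom Q U U' \<and> risom Q V V'))" by blast
qed



lemma inj_map_iff: "inj_on f (dom f) \<longleftrightarrow> (\<forall>x x' y. f x = Some y \<longrightarrow> f x' = Some y \<longrightarrow> x = x')"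
proof
  assume "inj_on f (dom f)" then show "\<forall>x x' y. f x = Some y \<longrightarrow> f x' = Some y \<longrightarrow> x = x'"
    by (auto simp: inj_on_def dom_def)
next
  assume h: "\<forall>x x' y. f x = Some y \<longrightarrow> f x' = Some y \<longrightarrow> x = x'"
  show "inj_on f (dom f)"
  proof (rule inj_onI)
    fix x x' assume "x \<in> dom f" "f x = f x'"
    then obtain y where "f x = Some y" "f x' = Some y" by (metis domD)
    then show "x = x'" using h by blast
  qed
qed

lemma inj_kcomp:
  assumes "inj_on f (dom f)" "inj_on g (dom g)"
  shows "inj_on (kcomp g f) (dom (kcomp g f))"
  unfolding inj_map_iff
proof (intro allI impI)
  fix x x' y assume "kcomp g f x = Some y" "kcomp g f x' = Some y"
  then obtain u u' where "f x = Some u" "g u = Some y" "f x' = Some u'" "g u' = Some y"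
    by (auto simp: kcomp_Some)
  then show "x = x'" using assms unfolding inj_map_iff by metis
qed

lemma transp_kcomp:
  assumes f: "inj_on f (dom f)" and g: "inj_on g (dom g)"
  shows "transp (kcomp g f) = kcomp (transp f) (transp g)"
proof (rule ext, rule option_eqI)
  fix w v
  show "transp (kcomp g f) w = Some v \<longleftrightarrow> kcomp (transp f) (transp g) w = Some v"
    by (simp add: transp_Some[OF inj_kcomp[OF f g]] kcomp_Some transp_Some[OF f] transp_Some[OF g])
       blast
qed

lemma transp_idmap: "transp (\<lambda>x. if x \<in> A then Some x else None) = (\<lambda>x. if x \<in> A then Some x else None)"
proof (rule ext, rule option_eqI)
  fix w v
  have inj: "inj_on (\<lambda>x. if x \<in> A then Some x else None) (dom (\<lambda>x. if x \<in> A then Some x else None))"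
    unfolding inj_map_iff by auto
  show "transp (\<lambda>x. if x \<in> A then Some x else None) w = Some v \<longleftrightarrow> (if w \<in> A then Some w else None) = Some v"
    by (simp add: transp_Some[OF inj]) auto
qed

lemma qi:
  assumes "quiver_inv Q"
  shows "sv Q (sv Q v) = v" "src Q (se Q a) = sv Q (tgt Q a)" "tgt Q (se Q a) = sv Q (src Q a)"
  using assms unfolding quiver_inv_def by (auto simp: fun_eq_iff)

lemma fst_dual[simp]: "fst (dual_obj Q R) v = fst R (sv Q v)" by (simp add: dual_obj_def)
lemma snd_dual[simp]: "snd (dual_obj Q R) a = transp (snd R (se Q a))" by (simp add: dual_obj_def)
lemma dual_mor_apply[simp]: "dual_mor Q \<phi> v = transp (\<phi> (sv Q v))" by (simp add: dual_mor_def)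

lemma f1_mor_transp:
  assumes fm: "f1_mor V W f"
  shows "f1_mor W V (transp f)"
proof (rule f1_morI)
  note tS = transp_Some[OF f1_morD(5)[OF fm]]
  fix x y assume "transp f x = Some y"
  then have "f y = Some x" using tS by blast
  then show "x \<in> W \<and> y \<in> V" using f1_morD(1,2)[OF fm] by blast
next
  note tS = transp_Some[OF f1_morD(5)[OF fm]]
  fix x x' y assume "transp f x = Some y" "transp f x' = Some y"
  then have "f y = Some x" "f y = Some x'" using tS by blast+
  then show "x = x'" by simp
qed

lemma is_rep_dual:
  assumes Q: "quiver_inv Q" and R: "is_rep Q R"
  shows "is_rep Q (dual_obj Q R)"
  unfolding is_rep_def
proof (intro conjI allI)
  have "{v. fst (dual_obj Q R) v \<noteq> {}} = sv Q ` {v. fst R v \<noteq> {}}"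
  proof
    show "{v. fst (dual_obj Q R) v \<noteq> {}} \<subseteq> sv Q ` {v. fst R v \<noteq> {}}"
    proof
      fix v assume "v \<in> {v. fst (dual_obj Q R) v \<noteq> {}}"
      then have "sv Q v \<in> {v. fst R v \<noteq> {}}" by simp
      then show "v \<in> sv Q ` {v. fst R v \<noteq> {}}" using qi(1)[OF Q, of v] by (metis image_eqI)
    qed
    show "sv Q ` {v. fst R v \<noteq> {}} \<subseteq> {v. fst (dual_obj Q R) v \<noteq> {}}"
      using qi(1)[OF Q] by auto
  qed
  then show "finite {v. fst (dual_obj Q R) v \<noteq> {}}" using is_repD(3)[OF R] by simp
  show "finite (fst (dual_obj Q R) v)" for v using is_repD(2)[OF R] by simp
  fix a
  show "f1_mor (fst (dual_obj Q R) (src Q a)) (fst (dual_obj Q R) (tgt Q a)) (snd (dual_obj Q R) a)"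
    using f1_mor_transp[OF is_repD(1)[OF R, of "se Q a"]] by (simp add: qi[OF Q])
qed

lemma dual_rep_mor:
  assumes Q: "quiver_inv Q" and R: "is_rep Q R" and S: "is_rep Q S" and m: "rep_mor Q R S \<phi>"
  shows "rep_mor Q (dual_obj Q S) (dual_obj Q R) (dual_mor Q \<phi>)"
  unfolding rep_mor_def
proof (intro conjI allI)
  fix v show "f1_mor (fst (dual_obj Q S) v) (fst (dual_obj Q R) v) (dual_mor Q \<phi> v)"
    using f1_mor_transp[OF rep_morD(1)[OF m]] by simp
next
  fix a
  define b where "b = se Q a"
  have sb: "src Q b = sv Q (tgt Q a)" and tb: "tgt Q b = sv Q (src Q a)" using qi[OF Q] by (auto simp: b_def)
  note ip = f1_morD(5)[OF rep_morD(1)[OF m]]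
  note iR = f1_morD(5)[OF is_repD(1)[OF R]]
  note iS = f1_morD(5)[OF is_repD(1)[OF S]]
  have "kcomp (transp (\<phi> (src Q b))) (transp (snd S b)) = transp (kcomp (snd S b) (\<phi> (src Q b)))"
    by (simp add: transp_kcomp[OF ip iS])
  also have "kcomp (snd S b) (\<phi> (src Q b)) = kcomp (\<phi> (tgt Q b)) (snd R b)"
    using rep_morD3[OF m] by metis
  also have "transp (kcomp (\<phi> (tgt Q b)) (snd R b)) = kcomp (transp (snd R b)) (transp (\<phi> (tgt Q b)))"
    by (simp add: transp_kcomp[OF iR ip])
  finally show "kcomp (dual_mor Q \<phi> (tgt Q a)) (snd (dual_obj Q S) a) = kcomp (snd (dual_obj Q R) a) (dual_mor Q \<phi> (src Q a))"
    by (simp add: b_def qi[OF Q])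
qed



lemma fst_quot[simp]: "fst (quot Q K i) v = fst K v - ran (i v)" by (simp add: quot_def)
lemma snd_quot: "snd (quot Q K i) a = (\<lambda>x. if x \<in> fst K (src Q a) - ran (i (src Q a)) then
              (case snd K a x of None \<Rightarrow> None
               | Some y \<Rightarrow> if y \<in> ran (i (tgt Q a)) then None else Some y)
            else None)" by (simp add: quot_def)

lemma quot_eq: "rcomp (dual_mor Q (\<lambda>v x. if x \<in> D v then Some x else None))
    (rcomp \<psi>1 (\<lambda>v x. if x \<in> D v then Some x else None)) = \<psi>1"
  if "\<And>v x y. \<psi>1 v x = Some y \<Longrightarrow> x \<in> D v \<and> y \<in> D (sv Q v)" for D \<psi>1
proof (intro ext)
  fix v x
  show "rcomp (dual_mor Q (\<lambda>v x. if x \<in> D v then Some x else None))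
    (rcomp \<psi>1 (\<lambda>v x. if x \<in> D v then Some x else None)) v x = \<psi>1 v x"
    using that[of v x] by (cases "\<psi>1 v x") (auto simp: rcomp_def kcomp_apply transp_idmap)
qed

lemma red_holds:
  assumes Q: "quiver_inv Q"
  shows "reduction_assumption Q"
  unfolding reduction_assumption_def Let_def
proof (intro allI impI)
  fix N \<psi> U j K k i
  assume sf: "sym_form Q N \<psi>" and Ur: "is_rep Q U" and iso: "isotropic Q N \<psi> U j"
    and ker: "is_kernel Q N (rcomp (dual_mor Q j) \<psi>) K k" and im: "rep_mor Q U K i"
    and kij: "rcomp k i = j"
  note ss = qi[OF Q]
  have Nr: "is_rep Q N" and \<psi>m: "rep_mor Q N (dual_obj Q N) \<psi>" and
    sym: "rcomp (dual_mor Q \<psi>) (rid N) = \<psi>"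
    using sf unfolding sym_form_def rep_iso_def by auto
  obtain \<psi>' where c1: "rcomp \<psi>' \<psi> = rid N"
    using sf unfolding sym_form_def rep_iso_def by auto
  note \<psi>f = f1_morD[OF rep_morD(1)[OF \<psi>m], simplified]
  have \<psi>dom: "\<exists>m. \<psi> v n = Some m" if "n \<in> fst N v" for v n
  proof -
    have "rcomp \<psi>' \<psi> v n = Some n" using c1 that by (simp add: rid_def)
    then show ?thesis by (cases "\<psi> v n") (auto simp: rcomp_def kcomp_apply)
  qed
  have \<psi>sym: "\<psi> (sv Q v) m = Some n" if "\<psi> v n = Some m" for v n m
  proof -
    have "n \<in> fst N v" using \<psi>f(1) that by blast
    then have "transp (\<psi> (sv Q v)) n = Some m"
      using fun_cong[OF fun_cong[OF sym, of v], of n] that by (simp add: rcomp_def kcomp_apply rid_def)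
    then show ?thesis using transp_Some[OF \<psi>f(5)] by blast
  qed
  have jm: "rep_mor Q U N j" and jd: "\<And>v. dom (j v) = fst U v"
    using iso unfolding isotropic_def inflation_def by auto
  note jf = f1_morD[OF rep_morD(1)[OF jm]]
  have Kr: "is_rep Q K" and km: "rep_mor Q K N k"
    and kz: "rcomp (rcomp (dual_mor Q j) \<psi>) k = rzero"
    and univ: "\<And>Z g. is_rep Q Z \<Longrightarrow> rep_mor Q Z N g \<Longrightarrow> rcomp (rcomp (dual_mor Q j) \<psi>) g = rzero \<Longrightarrow>
        (\<exists>!h. rep_mor Q Z K h \<and> rcomp k h = g)"
    using ker unfolding is_kernel_def by blast+
  note kf = f1_morD[OF rep_morD(1)[OF km]]
  note Nf = is_repD(1)[OF Nr, THEN f1_morD(2)]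
  note Ninj = is_repD(1)[OF Nr, THEN f1_morD(5)]
  define Ker where "Ker = (\<lambda>v. {n \<in> fst N v. \<forall>m. \<psi> v n = Some m \<longrightarrow> m \<notin> ran (j (sv Q v))})"
  have KerN: "Ker v \<subseteq> fst N v" for v by (auto simp: Ker_def)
  have cl: "m \<in> Ker (tgt Q a)" if n: "n \<in> Ker (src Q a)" and e: "snd N a n = Some m" for a n m
  proof -
    have mN: "m \<in> fst N (tgt Q a)" using Nf e by blast
    { fix p assume p: "\<psi> (tgt Q a) m = Some p" and pr: "p \<in> ran (j (sv Q (tgt Q a)))"
      obtain u where u: "j (sv Q (tgt Q a)) u = Some p" using pr by (auto simp: ran_def)
      obtain q where q: "\<psi> (src Q a) n = Some q" using \<psi>dom n KerN by blast
      have "kcomp (\<psi> (tgt Q a)) (snd N a) n = kcomp (snd (dual_obj Q N) a) (\<psi> (src Q a)) n"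
        using rep_morD(2)[OF \<psi>m] by blast
      then have "transp (snd N (se Q a)) q = Some p" using e p q by (simp add: kcomp_apply)
      then have sb: "snd N (se Q a) p = Some q" using transp_Some[OF Ninj] by blast
      have "kcomp (j (tgt Q (se Q a))) (snd U (se Q a)) u = kcomp (snd N (se Q a)) (j (src Q (se Q a))) u"
        using rep_morD(2)[OF jm] by blast
      then have "kcomp (j (sv Q (src Q a))) (snd U (se Q a)) u = Some q"
        using u sb by (simp add: ss kcomp_apply)
      then have "q \<in> ran (j (sv Q (src Q a)))" by (auto simp: kcomp_Some ran_def)
      then have False using n q by (auto simp: Ker_def)
    }
    then show ?thesis using mN by (auto simp: Ker_def)
  qed
  define K' where "K' = (Ker, \<lambda>a n. if n \<in> Ker (src Q a) then snd N a n else None)"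
  define k' where "k' = (\<lambda>v n. if n \<in> Ker v then Some n else (None :: nat option))"
  have K'r: "is_rep Q K'"
    unfolding is_rep_def K'_def fst_conv snd_conv
  proof (intro conjI allI)
    show "finite {v. Ker v \<noteq> {}}"
      using is_repD(3)[OF Nr] KerN by (metis (mono_tags, lifting) finite_subset mem_Collect_eq subsetI subset_empty)
    show "finite (Ker v)" for v using is_repD(2)[OF Nr] KerN finite_subset by metis
    fix a
    note r = f1_morD[OF is_repD(1)[OF Nr, of a]]
    show "f1_mor (Ker (src Q a)) (Ker (tgt Q a)) (\<lambda>n. if n \<in> Ker (src Q a) then snd N a n else None)"
      by (rule f1_morI) (auto split: if_splits intro: cl r(3))
  qed
  have k'm: "rep_mor Q K' N k'"
    unfolding rep_mor_def
  proof (intro conjI allI)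
    fix v show "f1_mor (fst K' v) (fst N v) (k' v)"
      using KerN by (intro f1_morI) (auto simp: K'_def k'_def split: if_splits)
  next
    fix a show "kcomp (k' (tgt Q a)) (snd K' a) = kcomp (snd N a) (k' (src Q a))"
      by (intro ext) (auto simp: K'_def k'_def kcomp_apply cl split: option.splits)
  qed
  have \<phi>app: "rcomp (dual_mor Q j) \<psi> v n = kcomp (transp (j (sv Q v))) (\<psi> v) n" for v n
    by (simp add: rcomp_def)
  have k'z: "rcomp (rcomp (dual_mor Q j) \<psi>) k' = rzero"
  proof (intro ext)
    fix v n
    show "rcomp (rcomp (dual_mor Q j) \<psi>) k' v n = rzero v n"
    proof (cases "n \<in> Ker v")
      case True
      then obtain m where m: "\<psi> v n = Some m" using \<psi>dom KerN by blast
      then have "m \<notin> ran (j (sv Q v))" using True by (auto simp: Ker_def)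
      then have "transp (j (sv Q v)) m = None" by (auto simp: transp_None ran_def)
      then show ?thesis using True m by (simp add: rcomp_def k'_def kcomp_apply rzero_def)
    qed (simp add: rcomp_def k'_def kcomp_apply rzero_def)
  qed
  obtain h1 where h1m: "rep_mor Q K' K h1" and h1k: "rcomp k h1 = k'"
    using univ[OF K'r k'm k'z] by blast
  have Kerk: "\<exists>x. k v x = Some n" if "n \<in> Ker v" for v n
  proof -
    have "rcomp k h1 v n = Some n" using h1k that by (simp add: k'_def)
    then show ?thesis by (auto simp: rcomp_def kcomp_Some)
  qed
  have kKer: "n \<in> Ker v" if kx: "k v x = Some n" for v x n
  proof -
    have nN: "n \<in> fst N v" using kf(2) kx by blast
    obtain m where m: "\<psi> v n = Some m" using \<psi>dom nN by blast
    have "rcomp (rcomp (dual_mor Q j) \<psi>) k v x = None" using kz by (simp add: rzero_def)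
    then have "transp (j (sv Q v)) m = None" using kx m by (simp add: rcomp_def kcomp_apply)
    then have "m \<notin> ran (j (sv Q v))" by (auto simp: transp_None ran_def)
    then show ?thesis using nN m by (auto simp: Ker_def)
  qed
  have kK': "rep_mor Q K K' k"
    unfolding rep_mor_def
  proof (intro conjI allI)
    fix v show "f1_mor (fst K v) (fst K' v) (k v)"
      using kf kKer by (intro f1_morI) (auto simp: K'_def)
  next
    fix a show "kcomp (k (tgt Q a)) (snd K a) = kcomp (snd K' a) (k (src Q a))"
    proof (rule ext)
      fix x
      have "kcomp (snd K' a) (k (src Q a)) x = kcomp (snd N a) (k (src Q a)) x"
        using kKer by (cases "k (src Q a) x") (auto simp: K'_def kcomp_apply)
      then show "kcomp (k (tgt Q a)) (snd K a) x = kcomp (snd K' a) (k (src Q a)) x"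
        using rep_morD(2)[OF km] by simp
    qed
  qed
  have kz': "rcomp (rcomp (dual_mor Q j) \<psi>) k = rzero" by (rule kz)
  have P1: "rep_mor Q K K (rid K) \<and> rcomp k (rid K) = k"
    using rid_rep_mor[OF Kr] kf(4) by (auto simp: rcomp_def kcomp_apply rid_def fun_eq_iff)
  have "rcomp k (rcomp h1 k) = rcomp k' k" by (simp add: rcomp_assoc h1k)
  also have "\<dots> = k"
    using kKer by (intro ext) (auto simp: rcomp_def kcomp_apply k'_def split: option.splits)
  finally have P2: "rep_mor Q K K (rcomp h1 k) \<and> rcomp k (rcomp h1 k) = k"
    using rep_mor_comp[OF kK' h1m] by blast
  have "rid K = rcomp h1 k" using univ[OF Kr km kz'] P1 P2 by blast
  then have ktot: "\<exists>n. k v x = Some n" if "x \<in> fst K v" for v x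
  proof -
    have "rcomp h1 k v x = Some x" using \<open>rid K = rcomp h1 k\<close> that
      by (metis rid_def)
    then show ?thesis by (auto simp: rcomp_def kcomp_Some)
  qed
    note if1 = f1_morD[OF rep_morD(1)[OF im]]
  have ji: "j v u = kcomp (k v) (i v) u" for v u using kij by (simp add: rcomp_def fun_eq_iff)
  have rani: "x \<in> ran (i v) \<longleftrightarrow> x \<in> fst K v \<and> (\<exists>n. k v x = Some n \<and> n \<in> ran (j v))" for v x
  proof
    assume "x \<in> ran (i v)"
    then obtain u where u: "i v u = Some x" by (auto simp: ran_def)
    then have xK: "x \<in> fst K v" using if1 by blast
    then obtain n where "k v x = Some n" using ktot by blast
    moreover have "j v u = Some n" using ji[of v u] u \<open>k v x = Some n\<close> by (simp add: kcomp_apply)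
    ultimately show "x \<in> fst K v \<and> (\<exists>n. k v x = Some n \<and> n \<in> ran (j v))" using xK by (auto simp: ran_def)
  next
    assume "x \<in> fst K v \<and> (\<exists>n. k v x = Some n \<and> n \<in> ran (j v))"
    then obtain n u where n: "k v x = Some n" and u: "j v u = Some n" by (auto simp: ran_def)
    then obtain x' where x': "i v u = Some x'" "k v x' = Some n" using ji[of v u] by (auto simp: kcomp_Some)
    then have "x' = x" using kf(3)[of v x' n x] n by blast
    then show "x \<in> ran (i v)" using x' by (auto simp: ran_def)
  qed
  have subr: "y \<in> ran (i (tgt Q a))" if h1: "x \<in> ran (i (src Q a))" and h2: "snd K a x = Some y" for a x y
  proof -
    obtain u where u: "i (src Q a) u = Some x" using h1 by (auto simp: ran_def)
    have "kcomp (i (tgt Q a)) (snd U a) u = kcomp (snd K a) (i (src Q a)) u"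
      using rep_morD(2)[OF im] by blast
    then have "kcomp (i (tgt Q a)) (snd U a) u = Some y" using u h2 by (simp add: kcomp_apply)
    then show ?thesis by (auto simp: kcomp_Some ran_def)
  qed
    define D where "D = (\<lambda>v. fst K v - ran (i v))"
  define B where "B = rcomp (dual_mor Q k) (rcomp \<psi> k)"
  have Bapp: "B v x = kcomp (transp (k (sv Q v))) (kcomp (\<psi> v) (k v)) x" for v x
    by (simp add: B_def rcomp_def)
  note kinj = kf(5)
  have B2: "\<exists>y n m. k v x = Some n \<and> \<psi> v n = Some m \<and> k (sv Q v) y = Some m \<and> B v x = Some y \<and> y \<in> D (sv Q v)"
    if xD: "x \<in> D v" for v x
  proof -
    obtain n where n: "k v x = Some n" using ktot xD by (auto simp: D_def)
    have nK: "n \<in> Ker v" using kKer n by blast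
    then obtain m where m: "\<psi> v n = Some m" using \<psi>dom KerN by blast
    have mj: "m \<notin> ran (j (sv Q v))" using nK m by (auto simp: Ker_def)
    have nj: "n \<notin> ran (j v)" using xD n rani[of x v] by (auto simp: D_def)
    have mKer: "m \<in> Ker (sv Q v)"
      using \<psi>f(2)[OF m] \<psi>sym[OF m] nj by (auto simp: Ker_def ss)
    obtain y where y: "k (sv Q v) y = Some m" using Kerk[OF mKer] by blast
    have "B v x = Some y" using n m y by (simp add: Bapp kcomp_apply transp_Some[OF kinj])
    moreover have "y \<in> D (sv Q v)" using y kf(1)[OF y] rani[of y "sv Q v"] mj by (auto simp: D_def)
    ultimately show ?thesis using n m y by blast
  qed
  have B3: "B v x = None" if xD: "x \<notin> D v" for v x
  proof (cases "x \<in> fst K v")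
    case False then show ?thesis using kf(4) by (simp add: Bapp kcomp_apply)
  next
    case True
    then have "x \<in> ran (i v)" using xD by (auto simp: D_def)
    then obtain n where n: "k v x = Some n" and nj: "n \<in> ran (j v)" using rani by blast
    obtain m where m: "\<psi> v n = Some m" using \<psi>dom kf(2)[OF n] by blast
    have "transp (k (sv Q v)) m = None"
    proof (rule ccontr)
      assume "transp (k (sv Q v)) m \<noteq> None"
      then obtain y where "transp (k (sv Q v)) m = Some y" by auto
      then have "k (sv Q v) y = Some m" using transp_Some[OF kinj] by blast
      then have "m \<in> Ker (sv Q v)" using kKer by blast
      then show False using \<psi>sym[OF m] nj by (auto simp: Ker_def ss)
    qed
    then show ?thesis using n m by (simp add: Bapp kcomp_apply)
  qed
  have B4: "B (sv Q v) y = Some x" if b: "B v x = Some y" for v x y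
  proof -
    have xD: "x \<in> D v" using B3 b by fastforce
    obtain y' n m where e: "k v x = Some n" "\<psi> v n = Some m" "k (sv Q v) y' = Some m" "B v x = Some y'"
      using B2[OF xD] by blast
    have "y' = y" using e(4) b by simp
    then show ?thesis using e \<psi>sym[OF e(2)]
      by (simp add: Bapp kcomp_apply ss transp_Some[OF kinj])
  qed
  have BD: "x \<in> D v \<and> y \<in> D (sv Q v)" if b: "B v x = Some y" for v x y
  proof -
    have xD: "x \<in> D v" using B3 b by fastforce
    then show ?thesis using B2[OF xD] b by auto
  qed
  have Bm0: "rep_mor Q K (dual_obj Q K) B"
    unfolding B_def
    by (rule rep_mor_comp[OF rep_mor_comp[OF km \<psi>m] dual_rep_mor[OF Q Kr Nr km]])
    define Nq where "Nq = quot Q K i"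
  have fNq: "fst Nq v = D v" for v by (simp add: Nq_def D_def)
  have sNq: "snd Nq a x = (if x \<in> D (src Q a) then (case snd K a x of None \<Rightarrow> None
      | Some y \<Rightarrow> if y \<in> ran (i (tgt Q a)) then None else Some y) else None)" for a x
    by (simp add: Nq_def D_def snd_quot)
  note Kf2 = is_repD(1)[OF Kr, THEN f1_morD(2)]
  note Kf1 = is_repD(1)[OF Kr, THEN f1_morD(1)]
  note Kinj = is_repD(1)[OF Kr, THEN f1_morD(3)]
  have Nqr: "is_rep Q Nq"
    unfolding is_rep_def fNq
  proof (intro conjI allI)
    have "{v. D v \<noteq> {}} \<subseteq> {v. fst K v \<noteq> {}}" by (auto simp: D_def)
    then show "finite {v. D v \<noteq> {}}" using is_repD(3)[OF Kr] finite_subset by blast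
    show "finite (D v)" for v using is_repD(2)[OF Kr] by (simp add: D_def)
    fix a show "f1_mor (D (src Q a)) (D (tgt Q a)) (snd Nq a)"
    proof (rule f1_morI)
      fix x y assume "snd Nq a x = Some y"
      then show "x \<in> D (src Q a) \<and> y \<in> D (tgt Q a)"
        using Kf2 by (auto simp: sNq D_def split: if_splits option.splits)
    next
      fix x x' y assume "snd Nq a x = Some y" "snd Nq a x' = Some y"
      then show "x = x'" using Kinj by (auto simp: sNq split: if_splits option.splits)
    qed
  qed
  have Tq: "transp (snd Nq b) z = transp (snd K b) z" if zD: "z \<in> D (tgt Q b)" for b z
  proof (rule option_eqI)
    fix w
    have iq: "inj_on (snd Nq b) (dom (snd Nq b))" using is_repD(1)[OF Nqr, THEN f1_morD(5)] .
    have ik: "inj_on (snd K b) (dom (snd K b))" using is_repD(1)[OF Kr, THEN f1_morD(5)] .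
    have "snd Nq b w = Some z \<longleftrightarrow> snd K b w = Some z"
    proof
      assume "snd Nq b w = Some z" then show "snd K b w = Some z"
        by (auto simp: sNq split: if_splits option.splits)
    next
      assume e: "snd K b w = Some z"
      have "w \<in> fst K (src Q b)" using Kf1 e by blast
      moreover have "w \<notin> ran (i (src Q b))" using subr[of w b z] e zD by (auto simp: D_def)
      ultimately show "snd Nq b w = Some z" using e zD by (auto simp: sNq D_def)
    qed
    then show "transp (snd Nq b) z = Some w \<longleftrightarrow> transp (snd K b) z = Some w"
      by (simp add: transp_Some[OF iq] transp_Some[OF ik])
  qed
  have Bm: "rep_mor Q Nq (dual_obj Q Nq) B"
    unfolding rep_mor_def
  proof (intro conjI allI)
    fix v show "f1_mor (fst Nq v) (fst (dual_obj Q Nq) v) (B v)"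
    proof (rule f1_morI)
      fix x y assume "B v x = Some y" then show "x \<in> fst Nq v \<and> y \<in> fst (dual_obj Q Nq) v"
        using BD by (simp add: fNq)
    next
      fix x x' y show "B v x = Some y \<Longrightarrow> B v x' = Some y \<Longrightarrow> x = x'"
      proof -
        assume a1: "B v x = Some y" "B v x' = Some y"
        have "B (sv Q v) y = Some x" "B (sv Q v) y = Some x'" using B4 a1 by blast+
        then show "x = x'" by simp
      qed
    qed
  next
    fix a show "kcomp (B (tgt Q a)) (snd Nq a) = kcomp (snd (dual_obj Q Nq) a) (B (src Q a))"
    proof (rule ext)
      fix x show "kcomp (B (tgt Q a)) (snd Nq a) x = kcomp (snd (dual_obj Q Nq) a) (B (src Q a)) x"
      proof (cases "x \<in> D (src Q a)")
        case False then show ?thesis using B3 by (simp add: kcomp_apply sNq)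
      next
        case True
        have L: "kcomp (B (tgt Q a)) (snd Nq a) x = kcomp (B (tgt Q a)) (snd K a) x"
          using True B3 Kf2 by (auto simp: kcomp_apply sNq D_def split: option.splits)
        obtain z where z: "B (src Q a) x = Some z" and zD: "z \<in> D (sv Q (src Q a))"
          using B2[OF True] by blast
        have "transp (snd Nq (se Q a)) z = transp (snd K (se Q a)) z"
          using Tq[of z "se Q a"] zD by (simp add: ss)
        then have R: "kcomp (snd (dual_obj Q Nq) a) (B (src Q a)) x = kcomp (snd (dual_obj Q K) a) (B (src Q a)) x"
          using z by (simp add: kcomp_apply)
        show ?thesis using L R rep_morD(2)[OF Bm0] by simp
      qed
    qed
  qed
  have Bsym: "sym_form Q Nq B"
    unfolding sym_form_def
  proof (intro conjI)
    show "is_rep Q Nq" by (rule Nqr)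
    show "rep_iso Q Nq (dual_obj Q Nq) B"
    proof (rule bij_iso[OF Nqr is_rep_dual[OF Q Nqr] Bm])
      fix v x assume "x \<in> fst Nq v" then show "B v x \<noteq> None" using B2 by (fastforce simp: fNq)
    next
      fix v y assume "y \<in> fst (dual_obj Q Nq) v"
      then have "y \<in> D (sv Q v)" by (simp add: fNq)
      then obtain x where "B (sv Q v) y = Some x" using B2 by blast
      then have "B v x = Some y" using B4 ss by metis
      then show "\<exists>x. B v x = Some y" by blast
    qed
    show "rcomp (dual_mor Q B) (rid Nq) = B"
    proof (intro ext)
      fix v x
      have iB: "inj_on (B (sv Q v)) (dom (B (sv Q v)))"
        using f1_morD(5)[OF rep_morD(1)[OF Bm]] .
      show "rcomp (dual_mor Q B) (rid Nq) v x = B v x"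
      proof (cases "x \<in> D v")
        case True
        then obtain y where y: "B v x = Some y" using B2 by blast
        then have "B (sv Q v) y = Some x" using B4 by blast
        then have "transp (B (sv Q v)) x = Some y" using transp_Some[OF iB] by blast
        then show ?thesis using True y by (simp add: rcomp_def rid_def fNq kcomp_apply)
      next
        case False then show ?thesis using B3 by (simp add: rcomp_def rid_def fNq kcomp_apply)
      qed
    qed
  qed
  have \<pi>eq: "quot_map K i = (\<lambda>v x. if x \<in> D v then Some x else None)"
    by (simp add: quot_map_def D_def)
  have ridq: "rid Nq = (\<lambda>v x. if x \<in> D v then Some x else None)"
    by (simp add: rid_def fNq)
  have Beq: "rcomp (dual_mor Q (\<lambda>v x. if x \<in> D v then Some x else None))
    (rcomp B (\<lambda>v x. if x \<in> D v then Some x else None)) = B"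
    by (rule quot_eq) (rule BD)
  have LHS: "rcomp (dual_mor Q k) (rcomp \<psi> k) = B" by (simp add: B_def)
  have uniq: "\<psi>1 = B" if s1: "sym_form Q Nq \<psi>1" and e1: "rcomp (dual_mor Q k) (rcomp \<psi> k) =
      rcomp (dual_mor Q (quot_map K i)) (rcomp \<psi>1 (quot_map K i))" for \<psi>1
  proof -
    have "rep_mor Q Nq (dual_obj Q Nq) \<psi>1" using s1 unfolding sym_form_def rep_iso_def by auto
    note f = f1_morD[OF rep_morD(1)[OF this]]
    have "rcomp (dual_mor Q (\<lambda>v x. if x \<in> D v then Some x else None))
      (rcomp \<psi>1 (\<lambda>v x. if x \<in> D v then Some x else None)) = \<psi>1"
      by (rule quot_eq) (use f in \<open>auto simp: fNq\<close>)
    then show ?thesis using e1 LHS \<pi>eq by simp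
  qed
  show "(\<exists>\<psi>'. sym_form Q (quot Q K i) \<psi>' \<and>
          rcomp (dual_mor Q k) (rcomp \<psi> k) =
          rcomp (dual_mor Q (quot_map K i)) (rcomp \<psi>' (quot_map K i))) \<and>
       (\<forall>\<psi>1 \<psi>2. sym_form Q (quot Q K i) \<psi>1 \<longrightarrow> sym_form Q (quot Q K i) \<psi>2 \<longrightarrow>
          rcomp (dual_mor Q k) (rcomp \<psi> k) = rcomp (dual_mor Q (quot_map K i)) (rcomp \<psi>1 (quot_map K i)) \<longrightarrow>
          rcomp (dual_mor Q k) (rcomp \<psi> k) = rcomp (dual_mor Q (quot_map K i)) (rcomp \<psi>2 (quot_map K i)) \<longrightarrow>
          (\<exists>\<phi>. rep_iso Q (quot Q K i) (quot Q K i) \<phi> \<and> rcomp (dual_mor Q \<phi>) (rcomp \<psi>2 \<phi>) = \<psi>1))"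
  proof (intro conjI allI impI)
    show "\<exists>\<psi>'. sym_form Q (quot Q K i) \<psi>' \<and>
          rcomp (dual_mor Q k) (rcomp \<psi> k) =
          rcomp (dual_mor Q (quot_map K i)) (rcomp \<psi>' (quot_map K i))"
      using Bsym Beq LHS \<pi>eq by (auto simp: Nq_def)
  next
    fix \<psi>1 \<psi>2
    assume s1: "sym_form Q (quot Q K i) \<psi>1" and s2: "sym_form Q (quot Q K i) \<psi>2"
      and e1: "rcomp (dual_mor Q k) (rcomp \<psi> k) = rcomp (dual_mor Q (quot_map K i)) (rcomp \<psi>1 (quot_map K i))"
      and e2: "rcomp (dual_mor Q k) (rcomp \<psi> k) = rcomp (dual_mor Q (quot_map K i)) (rcomp \<psi>2 (quot_map K i))"
    have 1: "\<psi>1 = B" using uniq s1 e1 by (simp add: Nq_def)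
    have 2: "\<psi>2 = B" using uniq s2 e2 by (simp add: Nq_def)
    have "rep_iso Q Nq Nq (rid Nq)"
      by (rule bij_iso[OF Nqr Nqr rid_rep_mor[OF Nqr]]) (auto simp: rid_def)
    moreover have "rcomp (dual_mor Q (rid Nq)) (rcomp \<psi>2 (rid Nq)) = \<psi>1"
      using Beq 1 2 ridq by simp
    ultimately show "\<exists>\<phi>. rep_iso Q (quot Q K i) (quot Q K i) \<phi> \<and> rcomp (dual_mor Q \<phi>) (rcomp \<psi>2 \<phi>) = \<psi>1"
      unfolding Nq_def by blast
  qed
qed


theorem lemma1p8:
  fixes Q :: "('v, 'e) quiver"
  assumes "quiver_inv Q"
  shows "combinatorial Q \<and> finite_direct_decomposition Q \<and> reduction_assumption Q"
  using combinatorial_holds fdd_holds red_holds[OF assms] by blast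

end
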